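(* Let $\mathcal Z$ be a sequence in $\mathbb D$ that is separated in the pseudo-hyperbolic metric. Then $D^+(\mathcal Z)=S^+(\mathcal Z)$, where $$D^+(\mathcal Z)=\limsup_{r\to1}\frac{\sup_{b\in\mathbb D}\sum_{a\in M_b(\mathcal Z),\,|a|<r}\frac{1-|a|^2}{2}}{\log\frac1{1-r^2}},\qquad S^+(\mathcal Z)=\limsup_{r\to1}\frac{\sup_{b\in\mathbb D}\frac1{2\pi}\int_0^{2\pi}k_{M_b(\mathcal Z)}(re^{i\theta})\,d\theta}{\log\frac1{1-r^2}}.$$
   Context: $\mathbb D$ is the open unit disk; $\psi(z,w)=\left|\frac{z-w}{1-\bar wz}\right|$; separated means $\inf\{\psi(a,b):a\ne b\in\mathcal Z\}>0$. $M_b(z)=\frac{b-z}{1-\bar bz}$ and $M_b(\mathcal Z)=\{M_b(a):a\in\mathcal Z\}$. For a sequence $\mathcal W$ with $\sum_{a\in\mathcal W}(1-|a|^2)^2<\infty$, $k_{\mathcal W}(z)=\frac{|z|^2}{2}\sum_{a\in\mathcal W}\frac{(1-|a|^2)^2}{|1-\bar az|^2}$; note $\frac1{2\pi}\int_0^{2\pi}k_{\mathcal W}(re^{i\theta})d\theta=\frac{r^2}{2}\sum_{a\in\mathcal W}\frac{(1-|a|^2)^2}{1-|a|^2r^2}$. *)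

theory Defs
  imports "HOL-Analysis.Analysis"
begin

definition psi :: "complex \<Rightarrow> complex \<Rightarrow> real" where
  "psi z w = norm ((z - w) / (1 - cnj w * z))"

definition separated :: "complex set \<Rightarrow> bool" where
  "separated Z \<longleftrightarrow> (\<exists>\<delta>>0. \<forall>a\<in>Z. \<forall>b\<in>Z. a \<noteq> b \<longrightarrow> \<delta> \<le> psi a b)"

definition Mob :: "complex \<Rightarrow> complex \<Rightarrow> complex" where
  "Mob b z = (b - z) / (1 - cnj b * z)"

definition kfun :: "complex set \<Rightarrow> complex \<Rightarrow> real" where
  "kfun W z = (norm z)\<^sup>2 / 2 *
     (\<Sum>\<^sub>\<infinity>a\<in>W. (1 - (norm a)\<^sup>2)\<^sup>2 / (norm (1 - cnj a * z))\<^sup>2)"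

definition upper_density :: "complex set \<Rightarrow> ereal" where
  "upper_density Z = Limsup (at_left 1) (\<lambda>r::real.
     (SUP b\<in>ball 0 1. ereal (\<Sum>a\<in>{a\<in>Mob b ` Z. norm a < r}. (1 - (norm a)\<^sup>2) / 2))
     / ereal (ln (1 / (1 - r\<^sup>2))))"

definition upper_S :: "complex set \<Rightarrow> ereal" where
  "upper_S Z = Limsup (at_left 1) (\<lambda>r::real.
     (SUP b\<in>ball 0 1. ereal (1 / (2 * pi) *
        integral {0..2*pi} (\<lambda>\<theta>. kfun (Mob b ` Z) (complex_of_real r * cis \<theta>))))
     / ereal (ln (1 / (1 - r\<^sup>2))))"

end

theory Submission
  imports Defs "HOL-Real_Asymp.Real_Asymp"
begin

lemma norm_cis_diff_le: "norm (cis a - cis b) \<le> \<bar>a - b\<bar>"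
proof -
  have "(norm (cis a - cis b))^2 = (cos a - cos b)^2 + (sin a - sin b)^2"
    by (simp add: cmod_power2)
  also have "\<dots> = 2 - 2 * cos (a - b)"
    by (simp add: cos_diff power2_eq_square algebra_simps)
  also have "\<dots> = 4 * (sin ((a-b)/2))^2"
  proof -
    have h: "2 * ((a - b) / 2) = a - b" by simp
    have "cos (a-b) = 1 - 2*(sin((a-b)/2))^2" using cos_double_sin[of "(a-b)/2"] unfolding h .
    thus ?thesis by linarith
  qed
  also have "\<dots> \<le> (a - b)^2"
  proof -
    have "\<bar>sin ((a-b)/2)\<bar> \<le> \<bar>(a-b)/2\<bar>" by (rule abs_sin_x_le_abs_x)
    hence "(sin ((a-b)/2))^2 \<le> ((a-b)/2)^2" by (metis abs_ge_zero power2_abs power_mono)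
    thus ?thesis by (simp add: power2_eq_square field_simps)
  qed
  finally have "(norm (cis a - cis b))^2 \<le> \<bar>a - b\<bar>^2" by simp
  thus ?thesis by (rule power2_le_imp_le[OF _ abs_ge_zero])
qed


lemma poisson_integral:
  fixes c :: complex
  assumes c: "norm c < 1"
  shows "((\<lambda>t. 1 / (norm (1 - c * cis t))^2) has_integral 2 * pi / (1 - (norm c)^2)) {0..2*pi}"
proof -
  define G where "G = (\<lambda>z::complex. z + 2 * \<i> * Ln (1 - c * exp (\<i> * z)))"
  define P where "P = (\<lambda>t::real. (1 + c * cis t) / (1 - c * cis t))"
  have re_pos: "Re (1 - c * cis t) > 0" for t
  proof -
    have "\<bar>Re (c * cis t)\<bar> \<le> norm (c * cis t)" by (rule abs_Re_le_cmod)
    also have "\<dots> < 1" using c by (simp add: norm_mult)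
    finally show ?thesis by simp
  qed
  have nz: "1 - c * cis t \<noteq> 0" for t
  proof
    assume "1 - c * cis t = 0"
    hence "Re (1 - c * cis t) = 0" by simp
    with re_pos[of t] show False by linarith
  qed
  have deriv: "((\<lambda>t. G (of_real t)) has_vector_derivative P t) (at t within {0..2*pi})" for t
  proof -
    define z0 where "z0 = (of_real t :: complex)"
    have e: "exp (\<i> * z0) = cis t" by (simp add: z0_def cis_conv_exp)
    have d1: "((\<lambda>z. 1 - c * exp (\<i> * z)) has_field_derivative (- c * (\<i> * exp(\<i>*z0)))) (at z0)"
      by (auto intro!: derivative_eq_intros)
    have d2: "(Ln has_field_derivative inverse (1 - c*exp(\<i>*z0))) (at (1 - c*exp(\<i>*z0)))"
      by (rule has_field_derivative_Ln) (use re_pos[of t] in \<open>auto simp: complex_nonpos_Reals_iff e\<close>)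
    have d3: "((\<lambda>z. Ln (1 - c * exp (\<i> * z))) has_field_derivative (inverse (1 - c*exp(\<i>*z0)) * (- c * (\<i> * exp(\<i>*z0))))) (at z0)"
      using DERIV_chain2[OF d2 d1] .
    have "(G has_field_derivative (1 + 2 * \<i> * (inverse (1 - c*exp(\<i>*z0)) * (- c * (\<i> * exp(\<i>*z0)))))) (at z0)"
      unfolding G_def by (intro derivative_intros DERIV_cmult d3)
    moreover have "1 + 2 * \<i> * (inverse (1 - c*exp(\<i>*z0)) * (- c * (\<i> * exp(\<i>*z0)))) = P t"
      using nz[of t] unfolding e P_def by (simp add: field_simps)
    ultimately have "(G has_field_derivative P t) (at (of_real t))" by (simp add: z0_def)
    thus ?thesis by (rule has_vector_derivative_real_field)
  qed
  have "(P has_integral G (of_real (2*pi)) - G (of_real 0)) {0..2*pi}"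
    by (rule fundamental_theorem_of_calculus) (use deriv in auto)
  moreover have "G (of_real (2*pi)) - G (of_real 0) = 2 * pi"
  proof -
    have "exp (\<i> * (2 * complex_of_real pi)) = 1"
      using exp_two_pi_i by (simp add: mult.commute mult.left_commute)
    thus ?thesis by (simp add: G_def)
  qed
  ultimately have Pint: "(P has_integral of_real (2*pi)) {0..2*pi}" by simp
  have "((\<lambda>t. Re (P t)) has_integral Re (of_real (2*pi))) {0..2*pi}"
    using has_integral_linear[OF Pint bounded_linear_Re] by (simp add: o_def)
  hence ReP: "((\<lambda>t. Re (P t)) has_integral 2*pi) {0..2*pi}" by simp
  have "Re (P t) = (1 - (norm c)^2) / (norm (1 - c * cis t))^2" for t
  proof -
    define w where "w = c * cis t"
    have nw: "norm w = norm c" by (simp add: w_def norm_mult)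
    have "Re (P t) = ((1 + Re w) * (1 - Re w) + Im w * (- Im w)) / (norm (1 - w))^2"
      unfolding P_def w_def[symmetric] by (simp add: Re_divide')
    also have "\<dots> = (1 - (norm w)^2) / (norm (1 - w))^2"
      using cmod_power2[of w] by (simp add: algebra_simps power2_eq_square)
    finally have "Re (P t) = (1 - (norm c)^2)/(norm (1-w))^2" by (simp only: nw)
    thus ?thesis by (simp only: w_def)
  qed
  hence "((\<lambda>t. (1 - (norm c)^2) / (norm (1 - c * cis t))^2) has_integral 2*pi) {0..2*pi}"
    using ReP by simp
  hence "((\<lambda>t. (1 / (1 - (norm c)^2)) * ((1 - (norm c)^2) / (norm (1 - c * cis t))^2)) has_integral (1 / (1 - (norm c)^2)) * (2*pi)) {0..2*pi}"
    by (rule has_integral_mult_right)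
  moreover have "1 - (norm c)^2 \<noteq> 0"
  proof -
    have "(norm c)^2 < 1^2" using c by (intro power_strict_mono) auto
    thus ?thesis by simp
  qed
  ultimately show ?thesis by simp
qed

lemma mob_denom_nz:
  assumes "norm b < 1" "norm z < 1"
  shows "1 - cnj b * z \<noteq> 0"
proof
  assume "1 - cnj b * z = 0"
  hence "norm (cnj b * z) = 1" by (metis eq_iff_diff_eq_0 norm_one)
  moreover have "norm (cnj b * z) < 1"
    using assms by (simp add: norm_mult) (metis abs_norm_cancel mult_le_one norm_ge_zero less_le_not_le mult_strict_mono' order_le_less zero_less_one mult_less_le_imp_less)
  ultimately show False by simp
qed

lemma mob_in_ball:
  assumes b: "norm b < 1" and z: "norm z < 1"
  shows "norm (Mob b z) < 1"
proof -
  have nz: "1 - cnj b * z \<noteq> 0" by (rule mob_denom_nz[OF b z])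
  have "(norm (b - z))^2 < (norm (1 - cnj b * z))^2"
  proof -
    have hb: "(Re b)^2 + (Im b)^2 < 1" using b cmod_power2[of b]
      by (metis norm_ge_zero power_strict_mono power_one zero_less_numeral)
    have hz: "(Re z)^2 + (Im z)^2 < 1" using z cmod_power2[of z]
      by (metis norm_ge_zero power_strict_mono power_one zero_less_numeral)
    have "(norm (1 - cnj b * z))^2 - (norm (b - z))^2 = (1 - ((Re b)^2 + (Im b)^2)) * (1 - ((Re z)^2 + (Im z)^2))"
      unfolding cmod_power2 by (simp add: power2_eq_square algebra_simps)
    also have "\<dots> > 0" using hb hz by (intro mult_pos_pos) auto
    finally show ?thesis by simp
  qed
  hence "norm (b - z) < norm (1 - cnj b * z)"
    by (rule power2_less_imp_less) simp
  thus ?thesis using nz by (simp add: Mob_def norm_divide divide_less_eq)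
qed

lemma psi_mob:
  assumes b: "norm b < 1" and z: "norm z < 1" and w: "norm w < 1"
  shows "psi (Mob b z) (Mob b w) = psi z w"
proof -
  have nz1: "1 - cnj b * z \<noteq> 0" by (rule mob_denom_nz[OF b z])
  have nz2: "1 - cnj b * w \<noteq> 0" by (rule mob_denom_nz[OF b w])
  have nz3: "1 - cnj w * z \<noteq> 0" by (rule mob_denom_nz[OF w z])
  have nz4: "1 - b * cnj w \<noteq> 0" using nz2
    by (metis complex_cnj_cnj complex_cnj_diff complex_cnj_mult complex_cnj_one complex_cnj_zero_iff)
  have nb: "1 - b * cnj b \<noteq> 0"
  proof
    assume "1 - b * cnj b = 0"
    hence "norm (b * cnj b) = 1" by (metis eq_iff_diff_eq_0 norm_one)
    hence "norm b * norm b = 1" by (simp add: norm_mult)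
    with b show False
      by (metis abs_norm_cancel less_irrefl mult_le_one norm_ge_zero less_imp_le mult_less_cancel_right1 not_le)
  qed
  have cM: "cnj (Mob b w) = (cnj b - cnj w) / (1 - b * cnj w)"
    by (simp add: Mob_def)
  have e1: "Mob b z - Mob b w = (w - z) * (1 - b * cnj b) / ((1 - cnj b * z) * (1 - cnj b * w))"
    using nz1 nz2 by (simp add: Mob_def divide_simps) (simp add: algebra_simps)
  have e2: "1 - cnj (Mob b w) * Mob b z = (1 - b * cnj b) * (1 - cnj w * z) / ((1 - b * cnj w) * (1 - cnj b * z))"
    unfolding cM using nz1 nz4 by (simp add: Mob_def divide_simps) (simp add: algebra_simps)
  have "psi (Mob b z) (Mob b w) = norm (w - z) * norm (1 - b * cnj w) / (norm (1 - cnj b * w) * norm (1 - cnj w * z))"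
  proof -
    have "(w - z) * (1 - b * cnj b) / ((1 - cnj b * z) * (1 - cnj b * w)) /
          ((1 - b * cnj b) * (1 - cnj w * z) / ((1 - b * cnj w) * (1 - cnj b * z)))
          = (w - z) * (1 - b * cnj w) / ((1 - cnj b * w) * (1 - cnj w * z))"
    proof -
      have gen: "\<And>X A B C D E::complex. A\<noteq>0 \<Longrightarrow> B\<noteq>0 \<Longrightarrow> C\<noteq>0 \<Longrightarrow> D\<noteq>0 \<Longrightarrow> E\<noteq>0 \<Longrightarrow>
          X*E/(A*B)/(E*D/(C*A)) = X*C/(B*D)" by (simp add: field_simps)
      show ?thesis by (rule gen[OF nz1 nz2 nz4 nz3 nb])
    qed
    thus ?thesis unfolding psi_def e1 e2 by (simp add: norm_mult norm_divide)
  qed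
  also have "norm (1 - b * cnj w) = norm (1 - cnj b * w)"
    by (metis complex_cnj_cnj complex_cnj_diff complex_cnj_mult complex_cnj_one complex_mod_cnj)
  also have "norm (w - z) = norm (z - w)" by (rule norm_minus_commute)
  finally show ?thesis using nz2 by (simp add: psi_def norm_divide)
qed

definition lev :: "complex \<Rightarrow> nat" where
  "lev a = (LEAST k. 1 < 2^(Suc k) * (1 - norm a))"

lemma lev_bounds:
  assumes "norm a < 1"
  shows "2^(lev a) * (1 - norm a) \<le> 1" "1 < 2^(Suc (lev a)) * (1 - norm a)"
proof -
  have u: "0 < 1 - norm a" using assms by simp
  obtain n where n: "1 / (1 - norm a) < 2^n" using real_arch_pow[of 2 "1 / (1 - norm a)"] by auto
  have ex: "1 < 2^(Suc n) * (1 - norm a)"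
  proof -
    have "1 < 2^n * (1 - norm a)" using n u by (simp add: divide_less_eq)
    also have "\<dots> \<le> 2^(Suc n) * (1 - norm a)" using u by (intro mult_right_mono) auto
    finally show ?thesis .
  qed
  show "1 < 2^(Suc (lev a)) * (1 - norm a)"
    unfolding lev_def by (rule LeastI[of _ n]) (rule ex)
  show "2^(lev a) * (1 - norm a) \<le> 1"
  proof (cases "lev a")
    case 0 thus ?thesis using assms by simp
  next
    case (Suc j)
    have "j < lev a" using Suc by simp
    hence "\<not> (1 < 2^(Suc j) * (1 - norm a))" unfolding lev_def by (rule not_less_Least)
    thus ?thesis using Suc by simp
  qed
qed

lemma floor_eq_dist:
  fixes x y :: real
  assumes "\<lfloor>x\<rfloor> = \<lfloor>y\<rfloor>"
  shows "\<bar>x - y\<bar> < 1"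
  using assms by linarith

lemma level_count:
  fixes W :: "complex set" and \<delta> :: real and M N k :: nat
  assumes W: "W \<subseteq> ball 0 1"
    and sep: "\<forall>a\<in>W. \<forall>c\<in>W. a \<noteq> c \<longrightarrow> \<delta> \<le> psi a c"
    and MN: "M > 0" "N > 0" "2 / M + 4 * pi / N \<le> \<delta>"
  shows "finite {a\<in>W. lev a = k} \<and> card {a\<in>W. lev a = k} \<le> (M + 1) * (N * 2^k + 1)"
proof -
  define L where "L = {a\<in>W. lev a = k}"
  define X :: real where "X = 2^k"
  have X: "X \<ge> 1" unfolding X_def by simp
  define bx where "bx = (\<lambda>a. (\<lfloor>M * X * norm a\<rfloor>, \<lfloor>N * X * (Arg a + pi) / (2*pi)\<rfloor>))"
  define S1 :: "int set" where "S1 = {int M * 2^k - int M .. int M * 2^k}"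
  define S2 :: "int set" where "S2 = {0 .. int N * 2^k}"
  have Lp: "norm a < 1" "X * (1 - norm a) \<le> 1" "1 < 2 * X * (1 - norm a)" if "a \<in> L" for a
  proof -
    show a1: "norm a < 1" using that W unfolding L_def by auto
    have "lev a = k" using that unfolding L_def by simp
    thus "X * (1 - norm a) \<le> 1" "1 < 2 * X * (1 - norm a)"
      using lev_bounds[OF a1] unfolding X_def by auto
  qed
  have inj: "inj_on bx L"
  proof (rule inj_onI, rule ccontr)
    fix a c assume a: "a \<in> L" and c: "c \<in> L" and eq: "bx a = bx c" and ne: "a \<noteq> c"
    have f1: "\<bar>M * X * norm a - M * X * norm c\<bar> < 1"
      using eq unfolding bx_def by (intro floor_eq_dist) simp
    have f2: "\<bar>N * X * (Arg a + pi) / (2*pi) - N * X * (Arg c + pi) / (2*pi)\<bar> < 1"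
      using eq unfolding bx_def by (intro floor_eq_dist) simp
    have MX: "M * X > 0" using MN X by simp
    have NX: "N * X > 0" using MN X by simp
    have d1: "\<bar>norm a - norm c\<bar> < 1 / (M * X)"
    proof -
      have "\<bar>M * X * norm a - M * X * norm c\<bar> = (M * X) * \<bar>norm a - norm c\<bar>"
        using MX X by (simp add: abs_mult right_diff_distrib[symmetric])
      thus ?thesis using f1 MX by (simp add: field_simps)
    qed
    have d2: "\<bar>Arg a - Arg c\<bar> < 2 * pi / (N * X)"
    proof -
      define q where "q = N * X / (2*pi)"
      have q: "q > 0" unfolding q_def using NX by simp
      have "N * X * (Arg a + pi) / (2*pi) - N * X * (Arg c + pi) / (2*pi) = q * (Arg a - Arg c)"
        unfolding q_def by (simp add: diff_divide_distrib[symmetric] algebra_simps)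
      hence "q * \<bar>Arg a - Arg c\<bar> < 1" using f2 q by (simp add: abs_mult)
      hence "\<bar>Arg a - Arg c\<bar> < 1 / q" using q by (simp add: less_divide_eq mult.commute)
      also have "1 / q = 2 * pi / (N * X)" unfolding q_def by simp
      finally show ?thesis .
    qed
    have "a - c = of_real (norm a - norm c) * cis (Arg a) + of_real (norm c) * (cis (Arg a) - cis (Arg c))"
    proof -
      have "a = of_real (norm a) * cis (Arg a)" using rcis_cmod_Arg[of a] by (simp add: rcis_def)
      moreover have "c = of_real (norm c) * cis (Arg c)" using rcis_cmod_Arg[of c] by (simp add: rcis_def)
      ultimately show ?thesis by (simp add: algebra_simps)
    qed
    hence "norm (a - c) \<le> \<bar>norm a - norm c\<bar> + norm c * norm (cis (Arg a) - cis (Arg c))"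
      by (metis (no_types, lifting) norm_triangle_ineq norm_mult norm_of_real norm_cis mult.right_neutral abs_norm_cancel)
    also have "\<dots> \<le> \<bar>norm a - norm c\<bar> + 1 * \<bar>Arg a - Arg c\<bar>"
      using Lp(1)[OF c] norm_cis_diff_le[of "Arg a" "Arg c"]
      by (intro add_left_mono mult_mono) auto
    also have "\<dots> < 1 / (M * X) + 2 * pi / (N * X)" using d1 d2 by simp
    finally have num: "norm (a - c) < 1 / (M * X) + 2 * pi / (N * X)" .
    have den: "norm (1 - cnj c * a) > 1 / (2 * X)"
    proof -
      have "norm (cnj c * a) = norm c * norm a" by (simp add: norm_mult)
      also have "\<dots> \<le> norm a" using Lp(1)[OF c] by (simp add: mult_left_le_one_le)
      finally have "norm (cnj c * a) \<le> norm a" .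
      hence "norm (1 - cnj c * a) \<ge> 1 - norm a" by (metis norm_triangle_ineq2 norm_one order_trans diff_left_mono)
      moreover have "1 - norm a > 1 / (2 * X)" using Lp(3)[OF a] X by (simp add: field_simps)
      ultimately show ?thesis by linarith
    qed
    have "psi a c = norm (a - c) / norm (1 - cnj c * a)" by (simp add: psi_def norm_divide)
    also have "\<dots> < (1 / (M * X) + 2 * pi / (N * X)) / (1 / (2 * X))"
      using num den X by (intro frac_less) auto
    also have "\<dots> = 2 / M + 4 * pi / N" using X MN by (simp add: field_simps)
    also have "\<dots> \<le> \<delta>" by (rule MN(3))
    finally have "psi a c < \<delta>" .
    moreover have "\<delta> \<le> psi a c" using sep a c ne unfolding L_def by auto
    ultimately show False by simp
  qed
  have sub: "bx ` L \<subseteq> S1 \<times> S2"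
  proof
    fix p assume "p \<in> bx ` L"
    then obtain a where a: "a \<in> L" and p: "p = bx a" by auto
    have MX: "M * X > 0" using MN X by simp
    have r1: "of_int (int M * 2^k - int M) \<le> M * X * norm a"
    proof -
      have "M * X * (1 - norm a) \<le> M" using Lp(2)[OF a] MN by (simp add: mult_left_le mult.assoc)
      thus ?thesis by (simp add: X_def algebra_simps)
    qed
    have r2: "M * X * norm a < of_int (int M * 2^k) + 1"
    proof -
      have "M * X * norm a \<le> M * X" using Lp(1)[OF a] MX by (simp add: mult_left_le)
      thus ?thesis by (simp add: X_def)
    qed
    have "int M * 2^k - int M \<le> \<lfloor>M * X * norm a\<rfloor>" using r1 by (simp only: le_floor_iff)
    moreover have "\<lfloor>M * X * norm a\<rfloor> \<le> int M * 2^k" using r2 by (simp only: floor_le_iff)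
    ultimately have "\<lfloor>M * X * norm a\<rfloor> \<in> S1" unfolding S1_def by simp
    moreover have "\<lfloor>N * X * (Arg a + pi) / (2*pi)\<rfloor> \<in> S2"
    proof -
      have a1: "0 \<le> (Arg a + pi) / (2*pi)" "(Arg a + pi) / (2*pi) \<le> 1"
        using mpi_less_Arg[of a] Arg_le_pi[of a] pi_gt_zero by (auto simp: field_simps)
      have NX: "N * X \<ge> 0" using X by simp
      have e: "N * X * (Arg a + pi) / (2*pi) = N * X * ((Arg a + pi) / (2*pi))" by simp
      have "0 \<le> N * X * ((Arg a + pi) / (2*pi))" by (rule mult_nonneg_nonneg[OF NX a1(1)])
      hence "0 \<le> \<lfloor>N * X * (Arg a + pi) / (2*pi)\<rfloor>" unfolding e by simp
      moreover have "N * X * ((Arg a + pi) / (2*pi)) \<le> N * X" by (rule mult_left_le[OF a1(2) NX])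
      hence "\<lfloor>N * X * (Arg a + pi) / (2*pi)\<rfloor> \<le> int N * 2^k" unfolding e X_def
        by (simp only: floor_le_iff) simp
      ultimately show ?thesis unfolding S2_def by simp
    qed
    ultimately show "p \<in> S1 \<times> S2" unfolding p bx_def by simp
  qed
  have fin: "finite (S1 \<times> S2)" unfolding S1_def S2_def by simp
  have finL: "finite L" using inj sub fin by (meson finite_imageD finite_subset)
  have "card L = card (bx ` L)" using inj by (simp add: card_image)
  also have "\<dots> \<le> card (S1 \<times> S2)" by (rule card_mono[OF fin sub])
  also have "\<dots> = (M + 1) * (N * 2^k + 1)" unfolding S1_def S2_def
    by (simp add: card_cartesian_product) (simp add: nat_add_distrib nat_mult_distrib nat_power_eq)
  finally show ?thesis using finL unfolding L_def by simp
qed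

lemma level_sum:
  fixes W :: "complex set" and \<delta> :: real and M N :: nat and w \<phi> :: "_ \<Rightarrow> real"
  assumes W: "W \<subseteq> ball 0 1"
    and sep: "\<forall>a\<in>W. \<forall>c\<in>W. a \<noteq> c \<longrightarrow> \<delta> \<le> psi a c"
    and MN: "M > 0" "N > 0" "2 / M + 4 * pi / N \<le> \<delta>"
    and A: "finite A" "A \<subseteq> W"
    and w: "\<And>a. a \<in> A \<Longrightarrow> 0 \<le> w a \<and> w a \<le> \<phi> (lev a)"
  shows "sum w A \<le> (\<Sum>k\<in>lev ` A. ((M + 1) * (N + 1)) * 2^k * \<phi> k)"
proof -
  have "sum w A = (\<Sum>k\<in>lev ` A. sum w {a\<in>A. lev a = k})"
    by (rule sum.image_gen[OF A(1)])
  also have "\<dots> \<le> (\<Sum>k\<in>lev ` A. ((M + 1) * (N + 1)) * 2^k * \<phi> k)"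
  proof (rule sum_mono)
    fix k assume k: "k \<in> lev ` A"
    then obtain a0 where a0: "a0 \<in> A" "lev a0 = k" by auto
    have phi: "0 \<le> \<phi> k" using w[OF a0(1)] a0(2) by auto
    have lc: "finite {a\<in>W. lev a = k} \<and> card {a\<in>W. lev a = k} \<le> (M + 1) * (N * 2^k + 1)"
      by (rule level_count[OF W sep MN])
    have sub: "{a\<in>A. lev a = k} \<subseteq> {a\<in>W. lev a = k}" using A by auto
    have "sum w {a\<in>A. lev a = k} \<le> sum (\<lambda>_. \<phi> k) {a\<in>A. lev a = k}"
      using w by (intro sum_mono) auto
    also have "\<dots> = card {a\<in>A. lev a = k} * \<phi> k" by simp
    also have "\<dots> \<le> card {a\<in>W. lev a = k} * \<phi> k"
      using card_mono[OF _ sub] lc phi by (intro mult_right_mono) auto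
    also have "\<dots> \<le> real ((M + 1) * (N * 2^k + 1)) * \<phi> k"
      using lc phi by (intro mult_right_mono) (auto simp del: of_nat_mult of_nat_add)
    also have "\<dots> \<le> ((M + 1) * (N + 1)) * 2^k * \<phi> k"
    proof -
      have "N * 2^k + 1 \<le> (N + 1) * (2::nat)^k"
        using one_le_power[of "2::nat" k] by simp
      hence "(M + 1) * (N * 2^k + 1) \<le> (M + 1) * (N + 1) * (2::nat)^k"
        using mult_le_mono2[of "N * 2^k + 1" "(N + 1) * 2^k" "M+1"] by (simp only: mult.assoc)
      hence "real ((M + 1) * (N * 2^k + 1)) \<le> real ((M + 1) * (N + 1) * 2^k)"
        by (simp only: of_nat_le_iff)
      thus ?thesis using phi by (intro mult_right_mono) auto
    qed
    finally show "sum w {a\<in>A. lev a = k} \<le> ((M + 1) * (N + 1)) * 2^k * \<phi> k" .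
  qed
  finally show ?thesis .
qed

lemma geo1:
  fixes S :: "nat set" and \<rho> :: real
  assumes "finite S" "\<rho> > 0" "\<And>k. k \<in> S \<Longrightarrow> 2^k * \<rho> < 1"
  shows "(\<Sum>k\<in>S. (2::real)^k) \<le> 2 / \<rho>"
proof (cases "S = {}")
  case True thus ?thesis using assms by simp
next
  case False
  define m where "m = Max S"
  have mS: "m \<in> S" using False assms(1) unfolding m_def by simp
  have sub: "S \<subseteq> {0..m}" using assms(1) unfolding m_def by auto
  have "(\<Sum>k\<in>S. (2::real)^k) \<le> (\<Sum>k=0..m. (2::real)^k)"
    by (rule sum_mono2) (use sub in auto)
  also have "\<dots> = 2^(Suc m) - 1" by (simp add: sum_gp)
  also have "\<dots> \<le> 2 * 2^m" by simp
  also have "\<dots> \<le> 2 / \<rho>" using assms(3)[OF mS] assms(2) by (simp add: field_simps)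
  finally show ?thesis .
qed

lemma geo2:
  fixes S :: "nat set" and \<rho> :: real
  assumes "finite S" "\<rho> > 0" "\<And>k. k \<in> S \<Longrightarrow> 1 < 2^(Suc k) * \<rho>"
  shows "(\<Sum>k\<in>S. (1/2::real)^k) \<le> 4 * \<rho>"
proof (cases "S = {}")
  case True thus ?thesis using assms by simp
next
  case False
  define m where "m = Min S"
  define n where "n = Max S"
  have mS: "m \<in> S" using False assms(1) unfolding m_def by simp
  have sub: "S \<subseteq> {m..n}" using assms(1) unfolding m_def n_def by auto
  have "(\<Sum>k\<in>S. (1/2::real)^k) \<le> (\<Sum>k=m..n. (1/2::real)^k)"
    by (rule sum_mono2) (use sub in auto)
  also have "\<dots> = ((1/2)^m - (1/2)^Suc n) / (1 - 1/2)"
    using sub mS by (auto simp add: sum_gp)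
  also have "\<dots> \<le> 2 * (1/2)^m" by simp
  also have "\<dots> \<le> 4 * \<rho>"
  proof -
    have "1 < 2 * 2^m * \<rho>" using assms(3)[OF mS] by simp
    hence "(1/2::real)^m < 2 * \<rho>" by (simp add: power_one_over field_simps)
    thus ?thesis by simp
  qed
  finally show ?thesis .
qed

locale sepset =
  fixes W :: "complex set" and \<delta> :: real and M N :: nat
  assumes W: "W \<subseteq> ball 0 1"
    and sep: "\<forall>a\<in>W. \<forall>c\<in>W. a \<noteq> c \<longrightarrow> \<delta> \<le> psi a c"
    and MN: "M > 0" "N > 0" "2 / M + 4 * pi / N \<le> \<delta>"
begin

definition K :: real where "K = real ((M + 1) * (N + 1))"

lemma K_pos: "K > 0" unfolding K_def by (simp only: of_nat_0_less_iff) simp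

lemma Wn: "a \<in> W \<Longrightarrow> norm a < 1" using W by auto

lemma lsum:
  assumes "finite A" "A \<subseteq> W" "\<And>a. a \<in> A \<Longrightarrow> 0 \<le> w a \<and> w a \<le> \<phi> (lev a)"
  shows "sum w A \<le> (\<Sum>k\<in>lev ` A. K * 2^k * \<phi> k)"
proof -
  have "sum w A \<le> (\<Sum>k\<in>lev ` A. real ((M + 1) * (N + 1) * 2^k) * \<phi> k)"
    using level_sum[OF W sep MN assms(1,2), of w \<phi>] assms(3) by blast
  also have "\<dots> = (\<Sum>k\<in>lev ` A. K * 2^k * \<phi> k)"
    unfolding K_def by (simp only: of_nat_mult of_nat_power) simp
  finally show ?thesis .
qed

lemma count_inner:
  assumes r: "0 < r" "r < 1"
  shows "finite {a\<in>W. norm a < r}" "card {a\<in>W. norm a < r} \<le> 2 * K / (1 - r)"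
proof -
  define A where "A = {a\<in>W. norm a < r}"
  obtain n where n: "1 / (1 - r) < 2^n" using real_arch_pow[of 2 "1 / (1 - r)"] by auto
  have levA: "2^(lev a) * (1 - r) < 1" if "a \<in> A" for a
  proof -
    have a: "norm a < 1" "norm a < r" using that Wn unfolding A_def by auto
    have "2^(lev a) * (1 - r) < 2^(lev a) * (1 - norm a)" using a by simp
    also have "\<dots> \<le> 1" by (rule lev_bounds(1)[OF a(1)])
    finally show ?thesis .
  qed
  have "A \<subseteq> (\<Union>k<n. {a\<in>W. lev a = k})"
  proof
    fix a assume a: "a \<in> A"
    have "2^(lev a) * (1 - r) < 2^n * (1 - r)"
      using levA[OF a] n r by (simp add: field_simps)
    hence "lev a < n" using r by simp
    thus "a \<in> (\<Union>k<n. {a\<in>W. lev a = k})" using a unfolding A_def by auto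
  qed
  moreover have "finite (\<Union>k<n. {a\<in>W. lev a = k})"
    using level_count[OF W sep MN] by auto
  ultimately have finA: "finite A" by (rule finite_subset)
  thus "finite {a\<in>W. norm a < r}" unfolding A_def .
  have "real (card A) = sum (\<lambda>_. 1::real) A" by simp
  also have "\<dots> \<le> (\<Sum>k\<in>lev ` A. K * 2^k * 1)"
    by (rule lsum) (use finA in \<open>auto simp: A_def\<close>)
  also have "\<dots> = K * (\<Sum>k\<in>lev ` A. 2^k)" by (simp add: sum_distrib_left)
  also have "\<dots> \<le> K * (2 / (1 - r))"
    using K_pos by (intro mult_left_mono geo1) (use finA r levA in auto)
  finally show "card {a\<in>W. norm a < r} \<le> 2 * K / (1 - r)" unfolding A_def by (simp add: mult.commute)
qed

lemma tail_sq:
  assumes r: "0 \<le> r" "r < 1" and A: "finite A" "A \<subseteq> {a\<in>W. r \<le> norm a}"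
  shows "(\<Sum>a\<in>A. (1 - norm a)^2) \<le> 4 * K * (1 - r)"
proof -
  have AW: "A \<subseteq> W" using A by auto
  have "(\<Sum>a\<in>A. (1 - norm a)^2) \<le> (\<Sum>k\<in>lev ` A. K * 2^k * ((1/2)^k * (1/2)^k))"
  proof (rule lsum[OF A(1) AW])
    fix a assume a: "a \<in> A"
    have n: "norm a < 1" using a AW Wn by auto
    have "2^(lev a) * (1 - norm a) \<le> 1" by (rule lev_bounds(1)[OF n])
    hence "1 - norm a \<le> (1/2)^(lev a)" by (simp add: power_one_over field_simps)
    hence "(1 - norm a)^2 \<le> ((1/2)^(lev a))^2" using n by (intro power_mono) auto
    thus "0 \<le> (1 - norm a)^2 \<and> (1 - norm a)^2 \<le> (1/2)^(lev a) * (1/2)^(lev a)"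
      by (simp add: power2_eq_square)
  qed
  also have "\<dots> = K * (\<Sum>k\<in>lev ` A. (1/2)^k)"
    by (simp add: sum_distrib_left power_one_over)
  also have "\<dots> \<le> K * (4 * (1 - r))"
  proof (intro mult_left_mono geo2)
    fix k assume "k \<in> lev ` A"
    then obtain a where a: "a \<in> A" "k = lev a" by auto
    have n: "norm a < 1" using a AW Wn by auto
    have "1 < 2^(Suc k) * (1 - norm a)" using lev_bounds(2)[OF n] a by simp
    also have "\<dots> \<le> 2^(Suc k) * (1 - r)" using a A by (intro mult_left_mono) auto
    finally show "1 < 2^(Suc k) * (1 - r)" .
  qed (use A r K_pos in auto)
  finally show ?thesis by (simp add: algebra_simps)
qed

lemma e_bound: "finite F \<Longrightarrow> F \<subseteq> W \<Longrightarrow> (\<Sum>a\<in>F. (1 - (norm a)^2)^2) \<le> 16 * K"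
proof -
  assume F: "finite F" "F \<subseteq> W"
  have "(\<Sum>a\<in>F. (1 - (norm a)^2)^2) \<le> (\<Sum>a\<in>F. 4 * (1 - norm a)^2)"
  proof (rule sum_mono)
    fix a assume "a \<in> F"
    hence n: "norm a < 1" using F Wn by auto
    have "1 - (norm a)^2 = (1 - norm a) * (1 + norm a)" by (simp add: power2_eq_square algebra_simps)
    also have "\<dots> \<le> (1 - norm a) * 2" using n by (intro mult_left_mono) auto
    finally have "1 - (norm a)^2 \<le> 2 * (1 - norm a)" by simp
    moreover have "0 \<le> 1 - (norm a)^2" using n by (simp add: abs_square_le_1 less_imp_le)
    ultimately have "(1 - (norm a)^2)^2 \<le> (2 * (1 - norm a))^2" by (intro power_mono) auto
    thus "(1 - (norm a)^2)^2 \<le> 4 * (1 - norm a)^2" by (simp add: power2_eq_square algebra_simps)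
  qed
  also have "\<dots> = 4 * (\<Sum>a\<in>F. (1 - norm a)^2)" by (simp add: sum_distrib_left)
  also have "\<dots> \<le> 4 * (4 * K * (1 - 0))" using F by (intro mult_left_mono tail_sq) auto
  finally show ?thesis by simp
qed

lemma e_summable: "(\<lambda>a. (1 - (norm a)^2)^2) summable_on W"
  by (rule nonneg_bdd_above_summable_on) (use e_bound in \<open>auto simp: bdd_above_def\<close>)

lemma sq_le: "norm a < 1 \<Longrightarrow> (1 - (norm a)^2)^2 \<le> 4 * (1 - norm a)^2"
proof -
  assume n: "norm a < 1"
  have "1 - (norm a)^2 = (1 - norm a) * (1 + norm a)" by (simp add: power2_eq_square algebra_simps)
  also have "\<dots> \<le> (1 - norm a) * 2" using n by (intro mult_left_mono) auto
  finally have "1 - (norm a)^2 \<le> 2 * (1 - norm a)" by simp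
  moreover have "0 \<le> 1 - (norm a)^2" using n by (simp add: abs_square_le_1 less_imp_le)
  ultimately have "(1 - (norm a)^2)^2 \<le> (2 * (1 - norm a))^2" by (intro power_mono) auto
  thus "(1 - (norm a)^2)^2 \<le> 4 * (1 - norm a)^2" by (simp add: power2_eq_square algebra_simps)
qed

definition hh :: "real \<Rightarrow> complex \<Rightarrow> real" where
  "hh r a = (1 - (norm a)^2)^2 / (1 - (norm a)^2 * r^2)"

definition fd :: "real \<Rightarrow> real" where
  "fd r = (\<Sum>a\<in>{a\<in>W. norm a < r}. (1 - (norm a)^2) / 2)"

definition gs :: "real \<Rightarrow> real" where
  "gs r = r^2 / 2 * infsum (hh r) W"

lemma hh_facts:
  assumes r: "0 \<le> r" "r < 1" and a: "a \<in> W"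
  shows "0 \<le> hh r a" "hh r a \<le> (1 - (norm a)^2)^2 / (1 - r)" "hh r a \<le> 4 * (1 - norm a)^2 / (1 - r)"
proof -
  have n: "norm a < 1" using a Wn by auto
  have s1: "(norm a)^2 \<le> 1" using n by (simp add: abs_square_le_1 less_imp_le)
  have t1: "r^2 \<le> r" using r by (simp add: power2_eq_square mult_left_le_one_le)
  have "(norm a)^2 * r^2 \<le> r^2" using s1 by (intro mult_left_le_one_le) auto
  hence den: "1 - (norm a)^2 * r^2 \<ge> 1 - r" using t1 by linarith
  have den0: "1 - r > 0" using r by simp
  show "0 \<le> hh r a" unfolding hh_def using den den0 by simp
  show h1: "hh r a \<le> (1 - (norm a)^2)^2 / (1 - r)" unfolding hh_def
    using den den0 by (intro divide_left_mono) auto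
  also have "\<dots> \<le> 4 * (1 - norm a)^2 / (1 - r)" using sq_le[OF n] den0 by (intro divide_right_mono) auto
  finally show "hh r a \<le> 4 * (1 - norm a)^2 / (1 - r)" .
qed

lemma hh_summable:
  assumes r: "0 \<le> r" "r < 1" and S: "S \<subseteq> W"
  shows "hh r summable_on S"
proof -
  have "(\<lambda>a. (1 / (1 - r)) * (1 - (norm a)^2)^2) summable_on W"
    by (rule summable_on_cmult_right[OF e_summable])
  hence "hh r summable_on W"
    by (rule summable_on_comparison_test) (use hh_facts[OF r] in auto)
  thus ?thesis using S by (rule summable_on_subset_banach)
qed

lemma fg_close:
  assumes r: "0 < r" "r < 1"
  shows "\<bar>fd r - gs r\<bar> \<le> 8 * K" "0 \<le> fd r" "fd r \<le> K / (1 - r)" "0 \<le> gs r"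
proof -
  define A where "A = {a\<in>W. norm a < r}"
  define B where "B = {a\<in>W. r \<le> norm a}"
  have finA: "finite A" unfolding A_def by (rule count_inner(1)[OF r])
  have cardA: "card A \<le> 2 * K / (1 - r)" unfolding A_def by (rule count_inner(2)[OF r])
  have WAB: "W = A \<union> B" "A \<inter> B = {}" unfolding A_def B_def by auto
  have r0: "0 \<le> r" using r by simp
  have inf: "infsum (hh r) W = sum (hh r) A + infsum (hh r) B"
    unfolding WAB(1) by (subst infsum_Un_disjoint) (use hh_summable[OF r0 r(2)] WAB finA in auto)
  have An: "\<And>a. a \<in> A \<Longrightarrow> norm a < 1" unfolding A_def using Wn by auto
  have trm: "0 \<le> (1 - (norm a)^2) / 2 - r^2/2 * hh r a \<and> (1 - (norm a)^2) / 2 - r^2/2 * hh r a \<le> (1 - r^2) / 2"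
    if a: "a \<in> A" for a
  proof -
    have n: "norm a < 1" by (rule An[OF a])
    define s where "s = (norm a)^2"
    define t where "t = r^2"
    have s: "0 \<le> s" "s < 1" unfolding s_def using n by (auto simp: power_less_one_iff abs_square_less_1)
    have t: "0 < t" "t < 1" unfolding t_def using r by (auto simp: abs_square_less_1)
    have st: "s * t < 1" using s t by (metis mult_strict_mono' le_less_trans mult_less_cancel_right1 mult_nonneg_nonneg not_less zero_le_one less_imp_le mult_le_one)
    have eq: "(1 - s) / 2 - t/2 * ((1 - s)^2 / (1 - s * t)) = (1 - s) * (1 - t) / (2 * (1 - s * t))"
      using st by (simp add: field_simps power2_eq_square)
    have "0 \<le> (1 - s) * (1 - t) / (2 * (1 - s * t))" using s t st by simp
    moreover have "(1 - s) * (1 - t) / (2 * (1 - s * t)) \<le> (1 - t) / 2"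
    proof -
      have "1 - s \<le> 1 - s * t" using s t by (simp add: mult_left_le)
      hence "(1 - s) / (1 - s * t) \<le> 1" using st by simp
      hence "(1 - s) / (1 - s * t) * (1 - t) \<le> 1 * (1 - t)" using t by (intro mult_right_mono) auto
      hence "(1 - s) / (1 - s * t) * (1 - t) / 2 \<le> 1 * (1 - t) / 2" by (intro divide_right_mono) auto
      moreover have "(1 - s) * (1 - t) / (2 * (1 - s * t)) = (1 - s) / (1 - s * t) * (1 - t) / 2"
        using st by (simp add: field_simps)
      ultimately show ?thesis by (simp only: mult_1)
    qed
    ultimately show ?thesis using eq unfolding hh_def s_def[symmetric] t_def[symmetric] by simp
  qed
  have P: "0 \<le> (\<Sum>a\<in>A. (1 - (norm a)^2) / 2 - r^2/2 * hh r a)"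
          "(\<Sum>a\<in>A. (1 - (norm a)^2) / 2 - r^2/2 * hh r a) \<le> 2 * K"
  proof -
    show "0 \<le> (\<Sum>a\<in>A. (1 - (norm a)^2) / 2 - r^2/2 * hh r a)" using trm by (intro sum_nonneg) auto
    have "(\<Sum>a\<in>A. (1 - (norm a)^2) / 2 - r^2/2 * hh r a) \<le> (\<Sum>a\<in>A. (1 - r^2) / 2)"
      using trm by (intro sum_mono) auto
    also have "\<dots> = card A * ((1 - r) * (1 + r) / 2)" by (simp add: power2_eq_square algebra_simps)
    also have "\<dots> \<le> (2 * K / (1 - r)) * ((1 - r) * (1 + r) / 2)"
      using cardA r by (intro mult_right_mono) auto
    also have "\<dots> = K * (1 + r)" using r by (simp add: field_simps)
    also have "\<dots> \<le> K * 2" using r K_pos by (intro mult_left_mono) auto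
    finally show "(\<Sum>a\<in>A. (1 - (norm a)^2) / 2 - r^2/2 * hh r a) \<le> 2 * K" by simp
  qed
  have BW: "B \<subseteq> W" unfolding B_def by auto
  have T0: "0 \<le> infsum (hh r) B" by (rule infsum_nonneg) (use hh_facts[OF r0 r(2)] BW in auto)
  have T1: "infsum (hh r) B \<le> 16 * K"
  proof (rule infsum_le_finite_sums[OF hh_summable[OF r0 r(2) BW]])
    fix F assume F: "finite F" "F \<subseteq> B"
    have "sum (hh r) F \<le> (\<Sum>a\<in>F. 4 * (1 - norm a)^2 / (1 - r))"
      using F BW hh_facts(3)[OF r0 r(2)] by (intro sum_mono) auto
    also have "\<dots> = 4 / (1 - r) * (\<Sum>a\<in>F. (1 - norm a)^2)" by (simp add: sum_distrib_left)
    also have "\<dots> \<le> 4 / (1 - r) * (4 * K * (1 - r))"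
      using r F by (intro mult_left_mono tail_sq) (auto simp: B_def)
    also have "\<dots> = 16 * K" using r by simp
    finally show "sum (hh r) F \<le> 16 * K" .
  qed
  have diff: "fd r - gs r = (\<Sum>a\<in>A. (1 - (norm a)^2) / 2 - r^2/2 * hh r a) - r^2/2 * infsum (hh r) B"
    unfolding fd_def gs_def A_def[symmetric] inf by (simp add: sum_subtractf sum_distrib_left sum_distrib_right algebra_simps)
  have t1: "r^2 \<le> 1" using r by (simp add: abs_square_le_1)
  have T2: "0 \<le> r^2/2 * infsum (hh r) B" using T0 by simp
  have T3: "r^2/2 * infsum (hh r) B \<le> 1/2 * (16 * K)"
    using T0 T1 t1 by (intro mult_mono) auto
  show "\<bar>fd r - gs r\<bar> \<le> 8 * K" using diff P T2 T3 K_pos by linarith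
  show "0 \<le> fd r" unfolding fd_def using Wn by (intro sum_nonneg) (auto simp: abs_square_le_1 less_imp_le)
  have "fd r \<le> (\<Sum>a\<in>A. 1/2)" unfolding fd_def A_def[symmetric] by (intro sum_mono) auto
  also have "\<dots> = card A / 2" by simp
  also have "\<dots> \<le> (2 * K / (1 - r)) / 2" using cardA by (intro divide_right_mono) auto
  also have "(2 * K / (1 - r)) / 2 = K / (1 - r)" using r by (simp add: field_simps)
  finally show "fd r \<le> K / (1 - r)" .
  show "0 \<le> gs r" unfolding gs_def using T0
    by (intro mult_nonneg_nonneg infsum_nonneg) (use hh_facts[OF r0 r(2)] in auto)
qed

end

context sepset begin

definition uu :: "real \<Rightarrow> complex \<Rightarrow> real \<Rightarrow> real" where
  "uu r a t = (1 - (norm a)^2)^2 / (norm (1 - cnj a * (complex_of_real r * cis t)))^2"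

lemma uu_facts:
  assumes r: "0 \<le> r" "r < 1" and a: "a \<in> W"
  shows "0 \<le> uu r a t" "uu r a t \<le> (1 / (1 - r)^2) * (1 - (norm a)^2)^2"
    "norm (1 - cnj a * (complex_of_real r * cis t)) \<ge> 1 - r"
proof -
  have n: "norm a < 1" using a Wn by auto
  have "norm (cnj a * (complex_of_real r * cis t)) = norm a * r" using r by (simp add: norm_mult)
  also have "\<dots> \<le> r" using n r by (simp add: mult_left_le_one_le)
  finally have "norm (cnj a * (complex_of_real r * cis t)) \<le> r" .
  hence d: "norm (1 - cnj a * (complex_of_real r * cis t)) \<ge> 1 - r"
    by (metis norm_triangle_ineq2 norm_one order_trans diff_left_mono)
  thus "norm (1 - cnj a * (complex_of_real r * cis t)) \<ge> 1 - r" .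
  show "0 \<le> uu r a t" unfolding uu_def by simp
  have "(1 - r)^2 \<le> (norm (1 - cnj a * (complex_of_real r * cis t)))^2"
    using d r by (intro power_mono) auto
  moreover have "(1 - r)^2 > 0" using r by simp
  moreover have "0 < (norm (1 - cnj a * (complex_of_real r * cis t)))^2"
  proof -
    have "0 < norm (1 - cnj a * (complex_of_real r * cis t))" using d r by linarith
    thus ?thesis by simp
  qed
  ultimately have "uu r a t \<le> (1 - (norm a)^2)^2 / (1 - r)^2"
    unfolding uu_def by (intro divide_left_mono) auto
  thus "uu r a t \<le> (1 / (1 - r)^2) * (1 - (norm a)^2)^2" by simp
qed

lemma uu_integral:
  assumes r: "0 \<le> r" "r < 1" and a: "a \<in> W"
  shows "(uu r a has_integral (2 * pi * hh r a)) {0..2*pi}"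
proof -
  have n: "norm a < 1" using a Wn by auto
  define c where "c = cnj a * complex_of_real r"
  have nc: "norm c = norm a * r" unfolding c_def using r by (simp add: norm_mult)
  have c1: "norm c < 1" unfolding nc using n r
    by (metis le_less_trans mult_left_le_one_le norm_ge_zero less_imp_le mult_less_cancel_left2 mult.commute mult_le_one)
  have "((\<lambda>t. 1 / (norm (1 - c * cis t))^2) has_integral 2 * pi / (1 - (norm c)^2)) {0..2*pi}"
    by (rule poisson_integral[OF c1])
  hence "((\<lambda>t. (1 - (norm a)^2)^2 * (1 / (norm (1 - c * cis t))^2)) has_integral (1 - (norm a)^2)^2 * (2 * pi / (1 - (norm c)^2))) {0..2*pi}"
    by (rule has_integral_mult_right)
  moreover have "(\<lambda>t. (1 - (norm a)^2)^2 * (1 / (norm (1 - c * cis t))^2)) = uu r a"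
    unfolding uu_def c_def by (auto simp: mult.assoc)
  moreover have "(1 - (norm a)^2)^2 * (2 * pi / (1 - (norm c)^2)) = 2 * pi * hh r a"
    unfolding hh_def nc by (simp add: power_mult_distrib)
  ultimately show ?thesis by simp
qed

lemma uu_summable:
  assumes r: "0 \<le> r" "r < 1" and S: "S \<subseteq> W"
  shows "(\<lambda>a. uu r a t) summable_on S"
proof -
  have "(\<lambda>a. (1 / (1 - r)^2) * (1 - (norm a)^2)^2) summable_on W"
    by (rule summable_on_cmult_right[OF e_summable])
  hence "(\<lambda>a. uu r a t) summable_on W"
    by (rule summable_on_comparison_test) (use uu_facts[OF r] in auto)
  thus ?thesis using S by (rule summable_on_subset_banach)
qed

lemma infsum_integral:
  assumes r: "0 \<le> r" "r < 1"
  shows "((\<lambda>t. infsum (\<lambda>a. uu r a t) W) has_integral (2 * pi * infsum (hh r) W)) {0..2*pi}"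
proof -
  define F where "F = finite_subsets_at_top W"
  define e where "e = (\<lambda>a::complex. (1 - (norm a)^2)^2)"
  have r1: "(1 - r)^2 > 0" using r by simp
  have unif: "uniform_limit {0..2*pi} (\<lambda>A t. \<Sum>a\<in>A \<inter> W. uu r a t) (\<lambda>t. infsum (\<lambda>a. uu r a t) W) F"
  proof (rule uniform_limitI)
    fix \<epsilon> :: real assume \<epsilon>: "\<epsilon> > 0"
    have "((\<lambda>A. sum e A) \<longlongrightarrow> infsum e W) F"
      unfolding F_def e_def by (rule infsum_tendsto[OF e_summable])
    hence ev1: "\<forall>\<^sub>F A in F. dist (sum e A) (infsum e W) < \<epsilon> * (1 - r)^2"
      using \<epsilon> r1 by (auto simp: tendsto_iff)
    have ev2: "\<forall>\<^sub>F A in F. finite A \<and> A \<subseteq> W" unfolding F_def by auto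
    show "\<forall>\<^sub>F A in F. \<forall>t\<in>{0..2*pi}. dist (\<Sum>a\<in>A \<inter> W. uu r a t) (infsum (\<lambda>a. uu r a t) W) < \<epsilon>"
      using ev1 ev2
    proof eventually_elim
      case (elim A)
      hence A: "finite A" "A \<subseteq> W" and dA: "dist (sum e A) (infsum e W) < \<epsilon> * (1 - r)^2" by auto
      have WA: "W = A \<union> (W - A)" "A \<inter> (W - A) = {}" using A by auto
      have es: "infsum e W = sum e A + infsum e (W - A)"
        by (subst WA(1), subst infsum_Un_disjoint)
           (use A e_summable summable_on_subset_banach[OF e_summable] in \<open>auto simp: e_def\<close>)
      show ?case
      proof
        fix t assume "t \<in> {0..2*pi}"
        have us: "infsum (\<lambda>a. uu r a t) W = (\<Sum>a\<in>A. uu r a t) + infsum (\<lambda>a. uu r a t) (W - A)"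
          by (subst WA(1), subst infsum_Un_disjoint) (use A uu_summable[OF r] in auto)
        have s1: "(\<lambda>a. (1 / (1 - r)^2) * e a) summable_on (W - A)"
          unfolding e_def by (rule summable_on_cmult_right, rule summable_on_subset_banach[OF e_summable]) auto
        have "infsum (\<lambda>a. uu r a t) (W - A) \<le> infsum (\<lambda>a. (1 / (1 - r)^2) * e a) (W - A)"
          by (rule infsum_mono[OF uu_summable[OF r] s1]) (use uu_facts(2)[OF r] in \<open>auto simp: e_def\<close>)
        also have "\<dots> = (1 / (1 - r)^2) * infsum e (W - A)"
          by (rule infsum_cmult_right) (use summable_on_subset_banach[OF e_summable] in \<open>auto simp: e_def\<close>)
        also have "\<dots> < (1 / (1 - r)^2) * (\<epsilon> * (1 - r)^2)"
          using dA es r1 by (intro mult_strict_left_mono) (auto simp: dist_real_def)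
        also have "\<dots> = \<epsilon>" using r1 by simp
        finally have lt: "infsum (\<lambda>a. uu r a t) (W - A) < \<epsilon>" .
        have "0 \<le> infsum (\<lambda>a. uu r a t) (W - A)"
          by (rule infsum_nonneg) (use uu_facts[OF r] in auto)
        moreover have "A \<inter> W = A" using A by auto
        ultimately show "dist (\<Sum>a\<in>A \<inter> W. uu r a t) (infsum (\<lambda>a. uu r a t) W) < \<epsilon>"
          using lt us by (simp add: dist_real_def)
      qed
    qed
  qed
  have cont': "continuous_on {0..2*pi} (\<lambda>t. \<Sum>a\<in>A \<inter> W. uu r a t)" for A
  proof (intro continuous_intros)
    fix a assume a: "a \<in> A \<inter> W"
    show "continuous_on {0..2*pi} (uu r a)"
      unfolding uu_def
    proof (intro continuous_intros ballI)
      fix t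
      have "norm (1 - cnj a * (complex_of_real r * cis t)) \<ge> 1 - r" using uu_facts(3)[OF r] a by auto
      thus "(norm (1 - cnj a * (complex_of_real r * cis t)))^2 \<noteq> 0" using r by auto
    qed
  qed
  obtain I J where I: "\<And>A. ((\<lambda>t. \<Sum>a\<in>A \<inter> W. uu r a t) has_integral I A) {0..2*pi}"
    and J: "((\<lambda>t. infsum (\<lambda>a. uu r a t) W) has_integral J) {0..2*pi}"
    and IJ: "(I \<longlongrightarrow> J) F"
    using uniform_limit_integral[OF unif cont'] unfolding F_def by auto
  have "\<forall>\<^sub>F A in F. I A = (\<Sum>a\<in>A. 2 * pi * hh r a)"
    unfolding F_def
  proof (rule eventually_finite_subsets_at_top_weakI)
    fix A assume A: "finite A" "A \<subseteq> W"
    have "((\<lambda>t. \<Sum>a\<in>A. uu r a t) has_integral (\<Sum>a\<in>A. 2 * pi * hh r a)) {0..2*pi}"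
      by (rule has_integral_sum[OF A(1)]) (use uu_integral[OF r] A in auto)
    moreover have "A \<inter> W = A" using A by auto
    ultimately show "I A = (\<Sum>a\<in>A. 2 * pi * hh r a)" using I[of A] by (metis has_integral_unique)
  qed
  hence "((\<lambda>A. \<Sum>a\<in>A. 2 * pi * hh r a) \<longlongrightarrow> J) F"
    using IJ by (rule Lim_transform_eventually[rotated]) 
  moreover have "((\<lambda>A. \<Sum>a\<in>A. 2 * pi * hh r a) \<longlongrightarrow> infsum (\<lambda>a. 2 * pi * hh r a) W) F"
    unfolding F_def by (rule infsum_tendsto) (rule summable_on_cmult_right[OF hh_summable[OF r order_refl]])
  ultimately have "J = infsum (\<lambda>a. 2 * pi * hh r a) W"
    using tendsto_unique unfolding F_def by (metis finite_subsets_at_top_neq_bot)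
  also have "\<dots> = 2 * pi * infsum (hh r) W"
    by (rule infsum_cmult_right) (rule hh_summable[OF r order_refl])
  finally show ?thesis using J by simp
qed

end

lemma L_at_top: "filterlim (\<lambda>r::real. ln (1 / (1 - r^2))) at_top (at_left 1)"
  by real_asymp

lemma limsup_close:
  fixes x y :: "real \<Rightarrow> real" and F :: "real filter"
  assumes F: "F \<noteq> bot" and lim: "((\<lambda>r. x r - y r) \<longlongrightarrow> 0) F"
  shows "Limsup F (\<lambda>r. ereal (x r)) \<le> Limsup F (\<lambda>r. ereal (y r))"
proof (rule ereal_le_epsilon2)
  fix e :: real assume e: "0 < e"
  have "\<forall>\<^sub>F r in F. dist (x r - y r) 0 < e" using lim e by (auto simp: tendsto_iff)
  hence "\<forall>\<^sub>F r in F. ereal (x r) \<le> ereal (y r) + ereal e"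
    by eventually_elim (auto simp: dist_real_def)
  hence "Limsup F (\<lambda>r. ereal (x r)) \<le> Limsup F (\<lambda>r. ereal (y r) + ereal e)"
    by (rule Limsup_mono)
  also have "\<dots> = Limsup F (\<lambda>r. ereal (y r)) + ereal e"
    by (rule Limsup_add_ereal_right[OF F]) simp
  finally show "Limsup F (\<lambda>r. ereal (x r)) \<le> Limsup F (\<lambda>r. ereal (y r)) + ereal e" .
qed

lemma limsup_eq_close:
  fixes x y :: "real \<Rightarrow> real" and F :: "real filter"
  assumes F: "F \<noteq> bot" and lim: "((\<lambda>r. x r - y r) \<longlongrightarrow> 0) F"
  shows "Limsup F (\<lambda>r. ereal (x r)) = Limsup F (\<lambda>r. ereal (y r))"
proof (rule antisym)
  show "Limsup F (\<lambda>r. ereal (x r)) \<le> Limsup F (\<lambda>r. ereal (y r))" by (rule limsup_close[OF F lim])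
  have "((\<lambda>r. - (x r - y r)) \<longlongrightarrow> - 0) F" by (rule tendsto_minus[OF lim])
  hence "((\<lambda>r. y r - x r) \<longlongrightarrow> 0) F" by simp
  thus "Limsup F (\<lambda>r. ereal (y r)) \<le> Limsup F (\<lambda>r. ereal (x r))" by (rule limsup_close[OF F])
qed

context sepset begin

lemma integral_eq:
  assumes r: "0 \<le> r" "r < 1"
  shows "1 / (2 * pi) * integral {0..2*pi} (\<lambda>\<theta>. kfun W (complex_of_real r * cis \<theta>)) = gs r"
proof -
  have k: "kfun W (complex_of_real r * cis \<theta>) = r^2 / 2 * infsum (\<lambda>a. uu r a \<theta>) W" for \<theta>
    unfolding kfun_def uu_def using r by (simp add: norm_mult)
  have "((\<lambda>\<theta>. r^2 / 2 * infsum (\<lambda>a. uu r a \<theta>) W) has_integral r^2 / 2 * (2 * pi * infsum (hh r) W)) {0..2*pi}"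
    by (rule has_integral_mult_right[OF infsum_integral[OF r]])
  hence "integral {0..2*pi} (\<lambda>\<theta>. kfun W (complex_of_real r * cis \<theta>)) = r^2 / 2 * (2 * pi * infsum (hh r) W)"
    unfolding k by (rule integral_unique)
  thus ?thesis unfolding gs_def by simp
qed

end

theorem mainTheorem13:
  fixes Z :: "complex set"
  assumes "Z \<subseteq> ball 0 1"
    and "separated Z"
  shows "upper_density Z = upper_S Z"
proof -
  note Z = assms(1)
  obtain \<delta> where \<delta>: "\<delta> > 0" and s\<delta>: "\<forall>a\<in>Z. \<forall>b\<in>Z. a \<noteq> b \<longrightarrow> \<delta> \<le> psi a b"
    using assms(2) unfolding separated_def by auto
  define M where "M = nat \<lceil>4 / \<delta>\<rceil> + 1"
  define N where "N = nat \<lceil>8 * pi / \<delta>\<rceil> + 1"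
  have M0: "M > 0" and N0: "N > 0" unfolding M_def N_def by auto
  have MN: "2 / M + 4 * pi / N \<le> \<delta>"
  proof -
    have "real M \<ge> 4 / \<delta>" unfolding M_def by linarith
    hence m: "2 / M \<le> \<delta> / 2" using \<delta> M0 by (simp add: field_simps)
    have "real N \<ge> 8 * pi / \<delta>" unfolding N_def by linarith
    hence n: "4 * pi / N \<le> \<delta> / 2" using \<delta> N0 by (simp add: field_simps)
    show ?thesis using m n by simp
  qed
  have loc: "sepset (Mob b ` Z) \<delta> M N" if b: "b \<in> ball 0 1" for b
  proof
    show "Mob b ` Z \<subseteq> ball 0 1" using Z b mob_in_ball by auto
    show "\<forall>a\<in>Mob b ` Z. \<forall>c\<in>Mob b ` Z. a \<noteq> c \<longrightarrow> \<delta> \<le> psi a c"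
    proof (intro ballI impI)
      fix a c assume a: "a \<in> Mob b ` Z" and c: "c \<in> Mob b ` Z" and ne: "a \<noteq> c"
      obtain z where z: "z \<in> Z" "a = Mob b z" using a by auto
      obtain w where w: "w \<in> Z" "c = Mob b w" using c by auto
      have "z \<noteq> w" using ne z w by auto
      hence "\<delta> \<le> psi z w" using s\<delta> z w by auto
      also have "psi z w = psi a c" unfolding z w
        by (rule psi_mob[symmetric]) (use b Z z w in auto)
      finally show "\<delta> \<le> psi a c" .
    qed
  qed (use M0 N0 MN in auto)
  define K where "K = real ((M + 1) * (N + 1))"
  have Kpos: "K > 0" unfolding K_def by (simp only: of_nat_0_less_iff) simp
  define FD where "FD = (\<lambda>b r. \<Sum>a\<in>{a\<in>Mob b ` Z. norm a < r}. (1 - (norm a)\<^sup>2) / 2)"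
  define GS where "GS = (\<lambda>b r. 1 / (2 * pi) *
        integral {0..2*pi} (\<lambda>\<theta>. kfun (Mob b ` Z) (complex_of_real r * cis \<theta>)))"
  have bounds: "\<bar>FD b r - GS b r\<bar> \<le> 8 * K \<and> 0 \<le> FD b r \<and> FD b r \<le> K / (1 - r) \<and> 0 \<le> GS b r"
    if b: "b \<in> ball 0 1" and r: "0 < r" "r < 1" for b r
  proof -
    interpret S: sepset "Mob b ` Z" \<delta> M N by (rule loc[OF b])
    have e1: "FD b r = S.fd r" unfolding FD_def S.fd_def ..
    have e2: "GS b r = S.gs r" unfolding GS_def using r by (intro S.integral_eq) auto
    have e3: "S.K = K" unfolding S.K_def K_def ..
    show ?thesis using S.fg_close[OF r] unfolding e1 e2 e3 by auto
  qed
  define D where "D = (\<lambda>r. SUP b\<in>ball 0 1. ereal (FD b r))"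
  define S where "S = (\<lambda>r. SUP b\<in>ball 0 1. ereal (GS b r))"
  define L where "L = (\<lambda>r::real. ln (1 / (1 - r\<^sup>2)))"
  have b0: "(0::complex) \<in> ball 0 1" by simp
  have DS: "D r \<le> S r + ereal (8 * K) \<and> S r \<le> D r + ereal (8 * K) \<and> 0 \<le> D r \<and> D r \<le> ereal (K / (1 - r)) \<and> 0 \<le> S r"
    if r: "0 < r" "r < 1" for r
  proof (intro conjI)
    show "D r \<le> S r + ereal (8 * K)" unfolding D_def
    proof (rule SUP_least)
      fix b :: complex assume b: "b \<in> ball 0 1"
      have "FD b r \<le> GS b r + 8 * K" using bounds[OF b r] by linarith
      hence "ereal (FD b r) \<le> ereal (GS b r) + ereal (8 * K)" by simp
      also have "\<dots> \<le> S r + ereal (8 * K)" unfolding S_def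
        by (intro add_right_mono SUP_upper b)
      finally show "ereal (FD b r) \<le> S r + ereal (8 * K)" .
    qed
    show "S r \<le> D r + ereal (8 * K)" unfolding S_def
    proof (rule SUP_least)
      fix b :: complex assume b: "b \<in> ball 0 1"
      have "GS b r \<le> FD b r + 8 * K" using bounds[OF b r] by linarith
      hence "ereal (GS b r) \<le> ereal (FD b r) + ereal (8 * K)" by simp
      also have "\<dots> \<le> D r + ereal (8 * K)" unfolding D_def
        by (intro add_right_mono SUP_upper b)
      finally show "ereal (GS b r) \<le> D r + ereal (8 * K)" .
    qed
    show "0 \<le> D r" unfolding D_def
      using bounds[OF b0 r] by (intro SUP_upper2[OF b0]) auto
    show "D r \<le> ereal (K / (1 - r))" unfolding D_def
      using bounds[OF _ r] by (intro SUP_least) auto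
    show "0 \<le> S r" unfolding S_def
      using bounds[OF b0 r] by (intro SUP_upper2[OF b0]) auto
  qed
  define d where "d = (\<lambda>r. real_of_ereal (D r))"
  define s where "s = (\<lambda>r. real_of_ereal (S r))"
  have fin: "D r = ereal (d r) \<and> S r = ereal (s r) \<and> \<bar>d r - s r\<bar> \<le> 8 * K" if r: "0 < r" "r < 1" for r
  proof -
    have h: "D r \<le> S r + ereal (8 * K)" "S r \<le> D r + ereal (8 * K)" "0 \<le> D r" "D r \<le> ereal (K / (1 - r))" "0 \<le> S r"
      using DS[OF r] by auto
    have Dd: "D r = ereal (d r)" unfolding d_def using h(3,4) by (cases "D r") auto
    have Ss: "S r = ereal (s r)" unfolding s_def using h(2,5) Dd by (cases "S r") auto
    have "d r \<le> s r + 8 * K" "s r \<le> d r + 8 * K" using h(1,2) unfolding Dd Ss by auto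
    thus ?thesis using Dd Ss by auto
  qed
  have Lpos: "L r > 0" if r: "0 < r" "r < 1" for r
  proof -
    have "r^2 < 1" "0 < r^2" using r by (auto simp: abs_square_less_1)
    hence "1 / (1 - r^2) > 1" by (simp add: field_simps)
    thus ?thesis unfolding L_def by (rule ln_gt_zero)
  qed
  have ev: "eventually (\<lambda>r. r \<in> {0<..<1}) (at_left (1::real))"
    by (rule eventually_at_left_real) simp
  have "upper_density Z = Limsup (at_left 1) (\<lambda>r. D r / ereal (L r))"
    unfolding upper_density_def D_def L_def FD_def ..
  also have "\<dots> = Limsup (at_left 1) (\<lambda>r. ereal (d r / L r))"
  proof (rule Limsup_eq, rule eventually_mono[OF ev])
    fix r :: real assume "r \<in> {0<..<1}"
    hence r: "0 < r" "r < 1" by auto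
    have "L r \<noteq> 0" using Lpos[OF r] by simp
    thus "D r / ereal (L r) = ereal (d r / L r)" using fin[OF r] by simp
  qed
  also have "\<dots> = Limsup (at_left 1) (\<lambda>r. ereal (s r / L r))"
  proof (rule limsup_eq_close)
    show "at_left (1::real) \<noteq> bot" by simp
    have Linf: "filterlim L at_infinity (at_left 1)"
      unfolding L_def by (rule filterlim_at_top_imp_at_infinity[OF L_at_top])
    have "((\<lambda>r. 8 * K / L r) \<longlongrightarrow> 0) (at_left 1)"
      by (rule tendsto_divide_0[OF tendsto_const Linf])
    moreover have "eventually (\<lambda>r. norm (d r / L r - s r / L r) \<le> 8 * K / L r) (at_left 1)"
    proof (rule eventually_mono[OF ev])
      fix r :: real assume "r \<in> {0<..<1}"
      hence r: "0 < r" "r < 1" by auto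
      have "norm (d r / L r - s r / L r) = \<bar>d r - s r\<bar> / L r"
        using Lpos[OF r] by (simp add: diff_divide_distrib[symmetric] abs_divide)
      also have "\<dots> \<le> 8 * K / L r" using fin[OF r] Lpos[OF r] by (intro divide_right_mono) auto
      finally show "norm (d r / L r - s r / L r) \<le> 8 * K / L r" .
    qed
    ultimately show "((\<lambda>r. d r / L r - s r / L r) \<longlongrightarrow> 0) (at_left 1)"
      using Lim_null_comparison[of "\<lambda>r. d r / L r - s r / L r" "\<lambda>r. 8 * K / L r" "at_left 1"] by blast
  qed
  also have "\<dots> = Limsup (at_left 1) (\<lambda>r. S r / ereal (L r))"
  proof (rule Limsup_eq, rule eventually_mono[OF ev])
    fix r :: real assume "r \<in> {0<..<1}"
    hence r: "0 < r" "r < 1" by auto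
    have "L r \<noteq> 0" using Lpos[OF r] by simp
    thus "ereal (s r / L r) = S r / ereal (L r)" using fin[OF r] by simp
  qed
  also have "\<dots> = upper_S Z"
    unfolding upper_S_def S_def L_def GS_def ..
  finally show ?thesis .
qed

end
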